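(* Let $m\ge 1$ and let $G,\Sigma\in C^2(\mathbb{R}^m)$. Then $$(\Xi+\nabla_\tau G(\tau))\cdot(\tau+\nabla_\Xi\Sigma(\Xi))\ \ge\ 0\qquad\text{for all }(\Xi,\tau)\in\mathbb{R}^m\times\mathbb{R}^m$$ holds if and only if all three of the following hold: (i) for every $(\Xi,\tau)\in\mathbb{R}^m\times\mathbb{R}^m$: $\Xi+\nabla_\tau G(\tau)=0$ if and only if $\tau+\nabla_\Xi\Sigma(\Xi)=0$; (ii) $G$ is convex; (iii) $\Sigma$ is convex.
   Context: $\nabla_\tau G$ denotes the gradient of $G$ with respect to its argument $\tau\in\mathbb{R}^m$, and $\nabla_\Xi\Sigma$ the gradient of $\Sigma$ with respect to its argument $\Xi\in\mathbb{R}^m$; the dot denotes the Euclidean inner product on $\mathbb{R}^m$. *)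

theory Defs
  imports "HOL-Analysis.Analysis"
begin

text \<open>Gradient of a scalar function on R^n: the vector of the Frechet derivative
  applied to the standard basis vectors, so that for differentiable f,
  Df(x) h = grad f x \<bullet> h.\<close>
definition grad :: "(real^'n \<Rightarrow> real) \<Rightarrow> real^'n \<Rightarrow> real^'n" where
  "grad f x = (\<chi> i. frechet_derivative f (at x) (axis i 1))"

definition C2 :: "(real^'n \<Rightarrow> real) \<Rightarrow> bool" where
  "C2 f \<longleftrightarrow> (\<forall>x. f differentiable (at x)) \<and>
            (\<forall>x. grad f differentiable (at x)) \<and>
            continuous_on UNIV (\<lambda>x. matrix (frechet_derivative (grad f) (at x)))"

end

theory Submission
  imports Defs
begin


lemma lin_repr:
  fixes L :: "real^'n \<Rightarrow> real"
  assumes "linear L"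
  shows "L h = (\<chi> i. L (axis i 1)) \<bullet> h"
proof -
  have "(\<Sum>i\<in>UNIV. h$i *\<^sub>R axis i 1) = h"
    using basis_expansion[of h] by (simp add: scalar_mult_eq_scaleR)
  then have "L h = L (\<Sum>i\<in>UNIV. h$i *\<^sub>R axis i 1)"
    by simp
  also have "\<dots> = (\<Sum>i\<in>UNIV. h$i * L (axis i 1))"
    using assms by (simp add: linear_sum linear_scale)
  also have "\<dots> = (\<chi> i. L (axis i 1)) \<bullet> h"
    by (simp add: inner_vec_def mult.commute)
  finally show ?thesis .
qed

lemma grad_deriv:
  fixes f :: "real^'n \<Rightarrow> real"
  assumes "f differentiable (at x)"
  shows "(f has_derivative (\<lambda>h. grad f x \<bullet> h)) (at x)"
proof -
  have d: "(f has_derivative frechet_derivative f (at x)) (at x)"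
    using assms frechet_derivative_works by blast
  have lin: "linear (frechet_derivative f (at x))"
    using d has_derivative_linear by blast
  have "frechet_derivative f (at x) = (\<lambda>h. grad f x \<bullet> h)"
    unfolding grad_def by (rule ext) (rule lin_repr[OF lin])
  with d show ?thesis by simp
qed

lemma line_deriv:
  fixes f :: "real^'n \<Rightarrow> real"
  assumes "\<And>x. f differentiable (at x)"
  shows "((\<lambda>t. f (a + t *\<^sub>R d)) has_real_derivative (grad f (a + t *\<^sub>R d) \<bullet> d)) (at t)"
proof -
  have g: "((\<lambda>t. a + t *\<^sub>R d) has_derivative (\<lambda>h. h *\<^sub>R d)) (at t)"
    by (auto intro!: derivative_eq_intros)
  have "((\<lambda>t. f (a + t *\<^sub>R d)) has_derivative (\<lambda>h. grad f (a + t *\<^sub>R d) \<bullet> (h *\<^sub>R d))) (at t)"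
    using has_derivative_compose[OF g grad_deriv[OF assms]] by (simp add: o_def)
  then show ?thesis
    unfolding has_field_derivative_def by (rule has_derivative_eq_rhs) (rule ext, simp add: mult.commute)
qed

lemma convex_line:
  fixes f :: "real^'n \<Rightarrow> real"
  assumes "convex_on UNIV f"
  shows "convex_on UNIV (\<lambda>t. f (a + t *\<^sub>R d))"
  unfolding convex_on_def
proof (intro conjI ballI allI impI convex_UNIV)
  fix s t u v :: real
  assume uv: "0 \<le> u" "0 \<le> v" "u + v = 1"
  have "u *\<^sub>R (a + s *\<^sub>R d) + v *\<^sub>R (a + t *\<^sub>R d) = (u + v) *\<^sub>R a + (u *\<^sub>R s + v *\<^sub>R t) *\<^sub>R d"
    by (simp add: algebra_simps)
  then have e: "a + (u *\<^sub>R s + v *\<^sub>R t) *\<^sub>R d = u *\<^sub>R (a + s *\<^sub>R d) + v *\<^sub>R (a + t *\<^sub>R d)"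
    using uv(3) by simp
  have "f (u *\<^sub>R (a + s *\<^sub>R d) + v *\<^sub>R (a + t *\<^sub>R d)) \<le> u * f (a + s *\<^sub>R d) + v * f (a + t *\<^sub>R d)"
    using assms uv unfolding convex_on_def by blast
  then show "f (a + (u *\<^sub>R s + v *\<^sub>R t) *\<^sub>R d) \<le> u * f (a + s *\<^sub>R d) + v * f (a + t *\<^sub>R d)"
    by (simp only: e)
qed

lemma convex_from_lines:
  fixes f :: "real^'n \<Rightarrow> real"
  assumes "\<And>a d. convex_on UNIV (\<lambda>t. f (a + t *\<^sub>R d))"
  shows "convex_on UNIV f"
  unfolding convex_on_def
proof (intro conjI ballI allI impI convex_UNIV)
  fix x y :: "real^'n" and u v :: real
  assume uv: "0 \<le> u" "0 \<le> v" "u + v = 1"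
  have v: "v = 1 - u" using uv by simp
  have "(\<lambda>t. f (y + t *\<^sub>R (x - y))) ((1 - u) *\<^sub>R 0 + u *\<^sub>R 1) \<le> (1 - u) * (\<lambda>t. f (y + t *\<^sub>R (x - y))) 0 + u * (\<lambda>t. f (y + t *\<^sub>R (x - y))) 1"
    by (rule convex_onD[OF assms]) (use uv in auto)
  then have "f (y + u *\<^sub>R (x - y)) \<le> (1 - u) * f y + u * f x" by simp
  moreover have "y + u *\<^sub>R (x - y) = u *\<^sub>R x + (1 - u) *\<^sub>R y" by (simp add: algebra_simps)
  ultimately show "f (u *\<^sub>R x + v *\<^sub>R y) \<le> u * f x + v * f y" by (simp add: v)
qed

lemma mono_imp_convex:
  fixes f :: "real^'n \<Rightarrow> real"
  assumes diff: "\<And>x. f differentiable (at x)"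
    and mono: "\<And>x y. (grad f x - grad f y) \<bullet> (x - y) \<ge> 0"
  shows "convex_on UNIV f"
proof (rule convex_from_lines)
  fix a d :: "real^'n"
  show "convex_on UNIV (\<lambda>t. f (a + t *\<^sub>R d))"
  proof (rule convex_on_realI)
    show "connected (UNIV::real set)" by simp
    show "((\<lambda>t. f (a + t *\<^sub>R d)) has_real_derivative (grad f (a + t *\<^sub>R d) \<bullet> d)) (at t)" for t
      using line_deriv[OF diff] .
    fix s t :: real assume "s \<le> t"
    have "0 \<le> (grad f (a + t *\<^sub>R d) - grad f (a + s *\<^sub>R d)) \<bullet> ((a + t *\<^sub>R d) - (a + s *\<^sub>R d))"
      by (rule mono)
    also have "\<dots> = (t - s) * (grad f (a + t *\<^sub>R d) \<bullet> d - grad f (a + s *\<^sub>R d) \<bullet> d)"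
      by (simp add: algebra_simps inner_diff_left)
    finally show "grad f (a + s *\<^sub>R d) \<bullet> d \<le> grad f (a + t *\<^sub>R d) \<bullet> d"
      using \<open>s \<le> t\<close> by (cases "s = t") (auto simp: zero_le_mult_iff)
  qed
qed

lemma convex_tangent:
  fixes f :: "real^'n \<Rightarrow> real"
  assumes diff: "\<And>x. f differentiable (at x)" and cv: "convex_on UNIV f"
  shows "f y - f x \<ge> grad f x \<bullet> (y - x)"
proof -
  have "(\<lambda>t. f (x + t *\<^sub>R (y - x))) 1 - (\<lambda>t. f (x + t *\<^sub>R (y - x))) 0 \<ge> (grad f (x + 0 *\<^sub>R (y - x)) \<bullet> (y - x)) * (1 - 0)"
    by (rule convex_on_imp_above_tangent[OF convex_line[OF cv]]) (use line_deriv[OF diff, of x "y - x" 0] in auto)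
  then show ?thesis by simp
qed

lemma convex_imp_mono:
  fixes f :: "real^'n \<Rightarrow> real"
  assumes diff: "\<And>x. f differentiable (at x)" and cv: "convex_on UNIV f"
  shows "(grad f x - grad f y) \<bullet> (x - y) \<ge> 0"
proof -
  have "f y - f x \<ge> grad f x \<bullet> (y - x)" "f x - f y \<ge> grad f y \<bullet> (x - y)"
    using convex_tangent[OF diff cv] by auto
  then show ?thesis by (simp add: algebra_simps inner_diff_left inner_diff_right)
qed


lemma zero_lemma:
  fixes g :: "real^'n \<Rightarrow> real^'n"
  assumes cg: "continuous_on UNIV g" and H: "\<And>\<tau>. 0 \<le> (p + g \<tau>) \<bullet> (\<tau> + c)"
  shows "p + g (-c) = 0"
proof -
  define w where "w = p + g (-c)"
  define v where "v = - w"
  define k where "k = (\<lambda>t::real. (p + g (-c + t *\<^sub>R v)) \<bullet> v)"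
  have cont: "continuous_on UNIV k"
  proof -
    have c1: "continuous_on UNIV (\<lambda>t::real. -c + t *\<^sub>R v)" by (intro continuous_intros)
    have c2: "continuous_on UNIV (\<lambda>t::real. g (-c + t *\<^sub>R v))"
      by (rule continuous_on_compose2[OF cg c1]) simp
    show ?thesis unfolding k_def by (intro continuous_on_inner continuous_on_add continuous_on_const c2)
  qed
  then have "isCont k 0" by (simp add: continuous_on_eq_continuous_at)
  then have "continuous (at 0 within {0<..}) k" by (rule continuous_at_imp_continuous_at_within)
  then have lim: "(k \<longlongrightarrow> k 0) (at 0 within {0<..})" by (simp add: continuous_within)
  have pos: "0 \<le> k t" if "t > 0" for t
  proof -
    have "0 \<le> (p + g (-c + t *\<^sub>R v)) \<bullet> ((-c + t *\<^sub>R v) + c)" by (rule H)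
    also have "\<dots> = t * k t" by (simp add: k_def)
    finally show ?thesis using that by (simp add: zero_le_mult_iff)
  qed
  have ev: "eventually (\<lambda>t. 0 \<le> k t) (at 0 within {0<..})"
    unfolding eventually_at_filter by (rule always_eventually) (auto intro: pos)
  have "0 \<le> k 0"
    by (rule tendsto_lowerbound[OF lim ev]) simp
  moreover have "k 0 = w \<bullet> v" unfolding k_def w_def by simp
  moreover have "w \<bullet> v = - (w \<bullet> w)" unfolding v_def by (rule inner_minus_right)
  ultimately have "w \<bullet> w \<le> 0" by linarith
  then have "w \<bullet> w = 0" using inner_ge_zero[of w] by linarith
  then show ?thesis unfolding w_def[symmetric] by simp
qed

lemma C2_diff: "C2 f \<Longrightarrow> f differentiable (at x)"
  by (simp add: C2_def)

lemma C2_cont: assumes "C2 f" shows "continuous_on UNIV (grad f)"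
proof (rule continuous_at_imp_continuous_on, rule ballI)
  fix x
  have "grad f differentiable (at x)" using assms by (simp add: C2_def)
  then show "isCont (grad f) x" by (rule differentiable_imp_continuous_within)
qed

theorem lemma3p1:
  fixes G \<Sigma> :: "real^'m \<Rightarrow> real"
  assumes "C2 G" and "C2 \<Sigma>"
  shows "(\<forall>\<Xi> \<tau>. (\<Xi> + grad G \<tau>) \<bullet> (\<tau> + grad \<Sigma> \<Xi>) \<ge> 0) \<longleftrightarrow>
         ((\<forall>\<Xi> \<tau>. \<Xi> + grad G \<tau> = 0 \<longleftrightarrow> \<tau> + grad \<Sigma> \<Xi> = 0) \<and>
          convex_on UNIV G \<and> convex_on UNIV \<Sigma>)"
proof
  assume H: "\<forall>\<Xi> \<tau>. (\<Xi> + grad G \<tau>) \<bullet> (\<tau> + grad \<Sigma> \<Xi>) \<ge> 0"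
  have FA: "\<Xi> + grad G (- grad \<Sigma> \<Xi>) = 0" for \<Xi>
    by (rule zero_lemma[OF C2_cont[OF assms(1)]]) (use H in auto)
  have FB: "\<tau> + grad \<Sigma> (- grad G \<tau>) = 0" for \<tau>
    by (rule zero_lemma[OF C2_cont[OF assms(2)]]) (use H in \<open>auto simp: inner_commute\<close>)
  have FA': "grad G (- grad \<Sigma> \<Xi>) = - \<Xi>" for \<Xi> using FA[of \<Xi>] by (simp add: add_eq_0_iff)
  have FB': "grad \<Sigma> (- grad G \<tau>) = - \<tau>" for \<tau> using FB[of \<tau>] by (simp add: add_eq_0_iff)
  have i: "\<Xi> + grad G \<tau> = 0 \<longleftrightarrow> \<tau> + grad \<Sigma> \<Xi> = 0" for \<Xi> \<tau>
  proof
    assume "\<Xi> + grad G \<tau> = 0"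
    then have "\<Xi> = - grad G \<tau>" by (simp add: eq_neg_iff_add_eq_0)
    then show "\<tau> + grad \<Sigma> \<Xi> = 0" using FB by simp
  next
    assume "\<tau> + grad \<Sigma> \<Xi> = 0"
    then have "\<tau> = - grad \<Sigma> \<Xi>" by (simp add: eq_neg_iff_add_eq_0)
    then show "\<Xi> + grad G \<tau> = 0" using FA by simp
  qed
  have cG: "convex_on UNIV G"
  proof (rule mono_imp_convex[OF C2_diff[OF assms(1)]])
    fix x y
    show "0 \<le> (grad G x - grad G y) \<bullet> (x - y)"
      using H[rule_format, of "- grad G y" x] by (simp add: FB')
  qed
  have cS: "convex_on UNIV \<Sigma>"
  proof (rule mono_imp_convex[OF C2_diff[OF assms(2)]])
    fix x y
    show "0 \<le> (grad \<Sigma> x - grad \<Sigma> y) \<bullet> (x - y)"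
      using H[rule_format, of x "- grad \<Sigma> y"] by (simp add: FA' inner_commute)
  qed
  show "(\<forall>\<Xi> \<tau>. \<Xi> + grad G \<tau> = 0 \<longleftrightarrow> \<tau> + grad \<Sigma> \<Xi> = 0) \<and> convex_on UNIV G \<and> convex_on UNIV \<Sigma>"
    using i cG cS by blast
next
  assume R: "(\<forall>\<Xi> \<tau>. \<Xi> + grad G \<tau> = 0 \<longleftrightarrow> \<tau> + grad \<Sigma> \<Xi> = 0) \<and> convex_on UNIV G \<and> convex_on UNIV \<Sigma>"
  show "\<forall>\<Xi> \<tau>. (\<Xi> + grad G \<tau>) \<bullet> (\<tau> + grad \<Sigma> \<Xi>) \<ge> 0"
  proof (intro allI)
    fix \<Xi> \<tau>
    define a where "a = - grad \<Sigma> \<Xi>"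
    have iff: "\<forall>\<Xi> \<tau>. \<Xi> + grad G \<tau> = 0 \<longleftrightarrow> \<tau> + grad \<Sigma> \<Xi> = 0" and cG: "convex_on UNIV G"
      using R by auto
    have "a + grad \<Sigma> \<Xi> = 0" by (simp add: a_def)
    then have "\<Xi> + grad G a = 0" using iff by blast
    then have e: "grad G a = - \<Xi>" by (simp add: add_eq_0_iff)
    have "0 \<le> (grad G \<tau> - grad G a) \<bullet> (\<tau> - a)"
      by (rule convex_imp_mono[OF C2_diff[OF assms(1)] cG])
    also have "\<dots> = (\<Xi> + grad G \<tau>) \<bullet> (\<tau> + grad \<Sigma> \<Xi>)"
      unfolding e by (simp add: a_def algebra_simps)
    finally show "(\<Xi> + grad G \<tau>) \<bullet> (\<tau> + grad \<Sigma> \<Xi>) \<ge> 0" .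
  qed
qed

end
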